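(* Let $R=\prod_{i=1}^nR_i$ be a direct product of rings $R_1,\ldots,R_n$. Then $R$ is a left localizable ring if and only if each of the rings $R_1,\ldots,R_n$ is a left localizable ring.
   Context: All rings are associative with $1$. A multiplicative subset $S$ of $R$ ($1\in S$, $0\notin S$, closed under multiplication) is a left Ore set if $Sr\cap Rs\neq\emptyset$ for all $r\in R$, $s\in S$. A left Ore set $S$ is a left denominator set if $rs=0$ ($r\in R$, $s\in S$) implies $tr=0$ for some $t\in S$. A ring $R$ is a left localizable ring if every nonzero element $r\in R$ lies in some left denominator set of $R$. *)

theory Defs
  imports "HOL-Algebra.Chinese_Remainder"
begin

definition multiplicative_subset :: "('a, 'm) ring_scheme \<Rightarrow> 'a set \<Rightarrow> bool" where
  "multiplicative_subset R S \<longleftrightarrow>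
     S \<subseteq> carrier R \<and> \<one>\<^bsub>R\<^esub> \<in> S \<and> \<zero>\<^bsub>R\<^esub> \<notin> S \<and>
     (\<forall>s\<in>S. \<forall>t\<in>S. s \<otimes>\<^bsub>R\<^esub> t \<in> S)"

definition left_Ore_set :: "('a, 'm) ring_scheme \<Rightarrow> 'a set \<Rightarrow> bool" where
  "left_Ore_set R S \<longleftrightarrow> multiplicative_subset R S \<and>
     (\<forall>r\<in>carrier R. \<forall>s\<in>S. \<exists>s'\<in>S. \<exists>r'\<in>carrier R. s' \<otimes>\<^bsub>R\<^esub> r = r' \<otimes>\<^bsub>R\<^esub> s)"

definition left_denominator_set :: "('a, 'm) ring_scheme \<Rightarrow> 'a set \<Rightarrow> bool" where
  "left_denominator_set R S \<longleftrightarrow> left_Ore_set R S \<and>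
     (\<forall>r\<in>carrier R. \<forall>s\<in>S. r \<otimes>\<^bsub>R\<^esub> s = \<zero>\<^bsub>R\<^esub> \<longrightarrow> (\<exists>t\<in>S. t \<otimes>\<^bsub>R\<^esub> r = \<zero>\<^bsub>R\<^esub>))"

definition left_localizable :: "('a, 'm) ring_scheme \<Rightarrow> bool" where
  "left_localizable R \<longleftrightarrow>
     (\<forall>r\<in>carrier R. r \<noteq> \<zero>\<^bsub>R\<^esub> \<longrightarrow> (\<exists>S. left_denominator_set R S \<and> r \<in> S))"

end

theory Submission imports Defs begin

lemma P_unfold: "RDirProd_list (R#Rs) = image_ring (\<lambda>(a, as). a # as) (RDirProd R (RDirProd_list Rs))"
  by (simp add: RDirProd_list_def)

lemma P_mult:
  assumes "x \<in> carrier R" "y \<in> carrier R" "xs \<in> carrier (RDirProd_list Rs)" "ys \<in> carrier (RDirProd_list Rs)"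
  shows "(x#xs) \<otimes>\<^bsub>RDirProd_list (R#Rs)\<^esub> (y#ys) = (x \<otimes>\<^bsub>R\<^esub> y) # (xs \<otimes>\<^bsub>RDirProd_list Rs\<^esub> ys)"
proof -
  have inj: "inj (\<lambda>(a::'a, as::'a list). a # as)" by (auto simp: inj_def)
  have i1: "inv_into (carrier R \<times> carrier (RDirProd_list Rs)) (\<lambda>(a, as). a # as) (x#xs) = (x,xs)"
    using assms by (intro inv_into_f_eq) (auto simp: inj_on_def)
  have i2: "inv_into (carrier R \<times> carrier (RDirProd_list Rs)) (\<lambda>(a, as). a # as) (y#ys) = (y,ys)"
    using assms by (intro inv_into_f_eq) (auto simp: inj_on_def)
  show ?thesis unfolding P_unfold
    by (simp add: image_ring_def image_group_def monoid.defs RDirProd_def DirProd_def i1[simplified] i2[simplified])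
qed

lemma P_zero: "\<zero>\<^bsub>RDirProd_list (R#Rs)\<^esub> = \<zero>\<^bsub>R\<^esub> # \<zero>\<^bsub>RDirProd_list Rs\<^esub>"
  by (rule RDirProd_list_zero')

lemma P_one: "\<one>\<^bsub>RDirProd_list (R#Rs)\<^esub> = \<one>\<^bsub>R\<^esub> # \<one>\<^bsub>RDirProd_list Rs\<^esub>"
  by (simp add: RDirProd_list_one)

lemma P_carrier: "carrier (RDirProd_list (R#Rs)) = {x#xs | x xs. x \<in> carrier R \<and> xs \<in> carrier (RDirProd_list Rs)}"
  by (auto simp: RDirProd_list_carrier)

definition D :: "('a, 'm) ring_scheme \<Rightarrow> 'a set \<Rightarrow> bool" where
  "D R T \<longleftrightarrow> T \<subseteq> carrier R \<and> \<one>\<^bsub>R\<^esub> \<in> T \<and> (\<forall>s\<in>T. \<forall>t\<in>T. s \<otimes>\<^bsub>R\<^esub> t \<in> T) \<and>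
     (\<forall>r\<in>carrier R. \<forall>s\<in>T. \<exists>s'\<in>T. \<exists>r'\<in>carrier R. s' \<otimes>\<^bsub>R\<^esub> r = r' \<otimes>\<^bsub>R\<^esub> s) \<and>
     (\<forall>r\<in>carrier R. \<forall>s\<in>T. r \<otimes>\<^bsub>R\<^esub> s = \<zero>\<^bsub>R\<^esub> \<longrightarrow> (\<exists>t\<in>T. t \<otimes>\<^bsub>R\<^esub> r = \<zero>\<^bsub>R\<^esub>))"

lemma lds_D: "left_denominator_set R S \<longleftrightarrow> D R S \<and> \<zero>\<^bsub>R\<^esub> \<notin> S"
  unfolding left_denominator_set_def left_Ore_set_def multiplicative_subset_def D_def by blast

lemma D_01: assumes "ring R" shows "D R {\<zero>\<^bsub>R\<^esub>, \<one>\<^bsub>R\<^esub>}"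
proof -
  interpret ring R by fact
  show ?thesis unfolding D_def
  proof (intro conjI ballI impI)
    fix r s assume r: "r \<in> carrier R" and s: "s \<in> {\<zero>\<^bsub>R\<^esub>, \<one>\<^bsub>R\<^esub>}"
    show "\<exists>s'\<in>{\<zero>\<^bsub>R\<^esub>, \<one>\<^bsub>R\<^esub>}. \<exists>r'\<in>carrier R. s' \<otimes>\<^bsub>R\<^esub> r = r' \<otimes>\<^bsub>R\<^esub> s"
    proof (cases "s = \<zero>\<^bsub>R\<^esub>")
      case True thus ?thesis using r by (intro bexI[of _ "\<zero>\<^bsub>R\<^esub>"] bexI[of _ r]) auto
    next
      case False thus ?thesis using r s by (intro bexI[of _ "\<one>\<^bsub>R\<^esub>"] bexI[of _ r]) auto
    qed
  next
    fix r s assume r: "r \<in> carrier R" and s: "s \<in> {\<zero>\<^bsub>R\<^esub>, \<one>\<^bsub>R\<^esub>}"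
    show "\<exists>t\<in>{\<zero>\<^bsub>R\<^esub>, \<one>\<^bsub>R\<^esub>}. t \<otimes>\<^bsub>R\<^esub> r = \<zero>\<^bsub>R\<^esub>" using r by (intro bexI[of _ "\<zero>\<^bsub>R\<^esub>"]) auto
  qed auto
qed

context
  fixes R :: "('a, 'n) ring_scheme" and Rs :: "('a, 'n) ring_scheme list"
  assumes rR: "ring R" and rQ: "ring (RDirProd_list Rs)"
begin

abbreviation "Q \<equiv> RDirProd_list Rs"
abbreviation "P \<equiv> RDirProd_list (R#Rs)"

lemma D_prod:
  assumes A: "D R A" and B: "D Q B"
  shows "D P {x#xs | x xs. x \<in> A \<and> xs \<in> B}"
proof -
  interpret R: ring R by (rule rR)
  interpret Q: ring Q by (rule rQ)
  have AC: "A \<subseteq> carrier R" and BC: "B \<subseteq> carrier Q" using A B unfolding D_def by auto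
  show ?thesis unfolding D_def
  proof (intro conjI ballI impI)
    show "{x#xs | x xs. x \<in> A \<and> xs \<in> B} \<subseteq> carrier P" using AC BC by (auto simp: P_carrier)
    show "\<one>\<^bsub>P\<^esub> \<in> {x#xs | x xs. x \<in> A \<and> xs \<in> B}" using A B by (auto simp: P_one D_def)
  next
    fix s t assume "s \<in> {x#xs | x xs. x \<in> A \<and> xs \<in> B}" "t \<in> {x#xs | x xs. x \<in> A \<and> xs \<in> B}"
    then obtain x xs y ys where "s = x#xs" "t = y#ys" "x \<in> A" "xs \<in> B" "y \<in> A" "ys \<in> B" by auto
    then show "s \<otimes>\<^bsub>P\<^esub> t \<in> {x#xs | x xs. x \<in> A \<and> xs \<in> B}"
      using A B AC BC by (auto simp: D_def P_mult subset_iff)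
  next
    fix r s assume r: "r \<in> carrier P" and "s \<in> {x#xs | x xs. x \<in> A \<and> xs \<in> B}"
    then obtain x xs z zs where sx: "s = x#xs" "x \<in> A" "xs \<in> B" and rz: "r = z#zs" "z \<in> carrier R" "zs \<in> carrier Q"
      by (auto simp: P_carrier)
    obtain s1 r1 where 1: "s1 \<in> A" "r1 \<in> carrier R" "s1 \<otimes>\<^bsub>R\<^esub> z = r1 \<otimes>\<^bsub>R\<^esub> x"
      using A sx rz unfolding D_def by meson
    obtain s2 r2 where 2: "s2 \<in> B" "r2 \<in> carrier Q" "s2 \<otimes>\<^bsub>Q\<^esub> zs = r2 \<otimes>\<^bsub>Q\<^esub> xs"
      using B sx rz unfolding D_def by meson
    show "\<exists>s'\<in>{x#xs | x xs. x \<in> A \<and> xs \<in> B}. \<exists>r'\<in>carrier P. s' \<otimes>\<^bsub>P\<^esub> r = r' \<otimes>\<^bsub>P\<^esub> s"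
    proof (intro bexI)
      show "(s1#s2) \<otimes>\<^bsub>P\<^esub> r = (r1#r2) \<otimes>\<^bsub>P\<^esub> s"
        using 1 2 sx rz AC BC by (auto simp: P_mult subset_iff)
      show "r1#r2 \<in> carrier P" using 1 2 by (auto simp: P_carrier)
      show "s1#s2 \<in> {x#xs | x xs. x \<in> A \<and> xs \<in> B}" using 1 2 by auto
    qed
  next
    fix r s assume r: "r \<in> carrier P" and "s \<in> {x#xs | x xs. x \<in> A \<and> xs \<in> B}"
      and rs: "r \<otimes>\<^bsub>P\<^esub> s = \<zero>\<^bsub>P\<^esub>"
    then obtain x xs z zs where sx: "s = x#xs" "x \<in> A" "xs \<in> B" and rz: "r = z#zs" "z \<in> carrier R" "zs \<in> carrier Q"
      by (auto simp: P_carrier)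
    have "(z \<otimes>\<^bsub>R\<^esub> x) # (zs \<otimes>\<^bsub>Q\<^esub> xs) = \<zero>\<^bsub>R\<^esub> # \<zero>\<^bsub>Q\<^esub>"
      using rs sx rz AC BC by (simp add: P_mult P_zero subset_iff)
    hence z1: "z \<otimes>\<^bsub>R\<^esub> x = \<zero>\<^bsub>R\<^esub>" and z2: "zs \<otimes>\<^bsub>Q\<^esub> xs = \<zero>\<^bsub>Q\<^esub>" by auto
    obtain t1 where 1: "t1 \<in> A" "t1 \<otimes>\<^bsub>R\<^esub> z = \<zero>\<^bsub>R\<^esub>" using A z1 sx rz unfolding D_def by meson
    obtain t2 where 2: "t2 \<in> B" "t2 \<otimes>\<^bsub>Q\<^esub> zs = \<zero>\<^bsub>Q\<^esub>" using B z2 sx rz unfolding D_def by meson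
    show "\<exists>t\<in>{x#xs | x xs. x \<in> A \<and> xs \<in> B}. t \<otimes>\<^bsub>P\<^esub> r = \<zero>\<^bsub>P\<^esub>"
      using 1 2 rz AC BC by (intro bexI[of _ "t1#t2"]) (auto simp: P_mult P_zero subset_iff)
  qed
qed

lemma loc_back:
  assumes "left_localizable R" "left_localizable Q"
  shows "left_localizable P"
  unfolding left_localizable_def
proof (intro ballI impI)
  interpret R: ring R by (rule rR)
  interpret Q: ring Q by (rule rQ)
  fix p assume p: "p \<in> carrier P" and p0: "p \<noteq> \<zero>\<^bsub>P\<^esub>"
  then obtain a as where pa: "p = a#as" "a \<in> carrier R" "as \<in> carrier Q" by (auto simp: P_carrier)
  obtain A where A: "D R A" "a \<in> A" "a \<noteq> \<zero>\<^bsub>R\<^esub> \<Longrightarrow> \<zero>\<^bsub>R\<^esub> \<notin> A"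
  proof (cases "a = \<zero>\<^bsub>R\<^esub>")
    case True thus ?thesis using that[of "{\<zero>\<^bsub>R\<^esub>, \<one>\<^bsub>R\<^esub>}"] D_01[OF rR] by auto
  next
    case False
    then obtain S where "left_denominator_set R S" "a \<in> S" using assms(1) pa unfolding left_localizable_def by blast
    thus ?thesis using that[of S] by (auto simp: lds_D)
  qed
  obtain B where B: "D Q B" "as \<in> B" "as \<noteq> \<zero>\<^bsub>Q\<^esub> \<Longrightarrow> \<zero>\<^bsub>Q\<^esub> \<notin> B"
  proof (cases "as = \<zero>\<^bsub>Q\<^esub>")
    case True thus ?thesis using that[of "{\<zero>\<^bsub>Q\<^esub>, \<one>\<^bsub>Q\<^esub>}"] D_01[OF rQ] by auto
  next
    case False
    then obtain S where "left_denominator_set Q S" "as \<in> S" using assms(2) pa unfolding left_localizable_def by blast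
    thus ?thesis using that[of S] by (auto simp: lds_D)
  qed
  have "a \<noteq> \<zero>\<^bsub>R\<^esub> \<or> as \<noteq> \<zero>\<^bsub>Q\<^esub>" using p0 pa by (auto simp: P_zero)
  hence "\<zero>\<^bsub>P\<^esub> \<notin> {x#xs | x xs. x \<in> A \<and> xs \<in> B}" using A B by (auto simp: P_zero)
  thus "\<exists>S. left_denominator_set P S \<and> p \<in> S"
    using D_prod[OF A(1) B(1)] A B pa by (intro exI[of _ "{x#xs | x xs. x \<in> A \<and> xs \<in> B}"]) (auto simp: lds_D)
qed

lemma loc_fwd1:
  assumes "left_localizable P"
  shows "left_localizable R"
  unfolding left_localizable_def
proof (intro ballI impI)
  interpret R: ring R by (rule rR)
  interpret Q: ring Q by (rule rQ)
  fix a assume a: "a \<in> carrier R" and a0: "a \<noteq> \<zero>\<^bsub>R\<^esub>"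
  have pc: "a # \<zero>\<^bsub>Q\<^esub> \<in> carrier P" using a by (auto simp: P_carrier)
  have "a # \<zero>\<^bsub>Q\<^esub> \<noteq> \<zero>\<^bsub>P\<^esub>" using a0 by (simp add: P_zero)
  then obtain S where S: "left_denominator_set P S" "a # \<zero>\<^bsub>Q\<^esub> \<in> S"
    using assms pc unfolding left_localizable_def by blast
  have DS: "D P S" and S0: "\<zero>\<^bsub>P\<^esub> \<notin> S" using S(1) by (auto simp: lds_D)
  have SC: "S \<subseteq> carrier P" using DS by (simp add: D_def)
  define T where "T = {x. \<exists>xs. x#xs \<in> S}"
  have Tc: "T \<subseteq> carrier R" using SC by (auto simp: T_def P_carrier)
  have mem: "\<And>s. s \<in> S \<Longrightarrow> \<exists>x xs. s = x#xs \<and> x \<in> T \<and> x \<in> carrier R \<and> xs \<in> carrier Q"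
    using SC unfolding T_def P_carrier by blast
  have "D R T" unfolding D_def
  proof (intro conjI ballI impI)
    show "T \<subseteq> carrier R" by (rule Tc)
    show "\<one>\<^bsub>R\<^esub> \<in> T" using DS by (auto simp: D_def T_def P_one)
  next
    fix x y assume "x \<in> T" "y \<in> T"
    then obtain xs ys where "x#xs \<in> S" "y#ys \<in> S" by (auto simp: T_def)
    moreover have "(x#xs) \<otimes>\<^bsub>P\<^esub> (y#ys) = (x \<otimes>\<^bsub>R\<^esub> y) # (xs \<otimes>\<^bsub>Q\<^esub> ys)"
      using calculation SC by (intro P_mult) (auto simp: P_carrier)
    ultimately show "x \<otimes>\<^bsub>R\<^esub> y \<in> T" using DS unfolding D_def T_def by (metis (mono_tags, lifting) mem_Collect_eq)
  next
    fix r x assume r: "r \<in> carrier R" and "x \<in> T"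
    then obtain xs where xs: "x#xs \<in> S" by (auto simp: T_def)
    have xc: "x \<in> carrier R" "xs \<in> carrier Q" using xs SC by (auto simp: P_carrier)
    have rc: "r # \<zero>\<^bsub>Q\<^esub> \<in> carrier P" using r by (auto simp: P_carrier)
    obtain s' r' where 1: "s' \<in> S" "r' \<in> carrier P" "s' \<otimes>\<^bsub>P\<^esub> (r # \<zero>\<^bsub>Q\<^esub>) = r' \<otimes>\<^bsub>P\<^esub> (x#xs)"
      using DS xs rc unfolding D_def by meson
    obtain y ys where y: "s' = y#ys" "y \<in> T" "y \<in> carrier R" "ys \<in> carrier Q" using mem[OF 1(1)] by blast
    obtain z zs where z: "r' = z#zs" "z \<in> carrier R" "zs \<in> carrier Q" using 1(2) by (auto simp: P_carrier)
    have "y \<otimes>\<^bsub>R\<^esub> r = z \<otimes>\<^bsub>R\<^esub> x" using 1(3) y z xc r by (simp add: P_mult)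
    thus "\<exists>s'\<in>T. \<exists>r'\<in>carrier R. s' \<otimes>\<^bsub>R\<^esub> r = r' \<otimes>\<^bsub>R\<^esub> x" using y z by blast
  next
    fix r x assume r: "r \<in> carrier R" and "x \<in> T" and rx: "r \<otimes>\<^bsub>R\<^esub> x = \<zero>\<^bsub>R\<^esub>"
    then obtain xs where xs: "x#xs \<in> S" by (auto simp: T_def)
    have xc: "x \<in> carrier R" "xs \<in> carrier Q" using xs SC by (auto simp: P_carrier)
    have rc: "r # \<zero>\<^bsub>Q\<^esub> \<in> carrier P" using r by (auto simp: P_carrier)
    have "(r # \<zero>\<^bsub>Q\<^esub>) \<otimes>\<^bsub>P\<^esub> (x#xs) = \<zero>\<^bsub>P\<^esub>" using rx r xc by (simp add: P_mult P_zero)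
    then obtain t where t: "t \<in> S" "t \<otimes>\<^bsub>P\<^esub> (r # \<zero>\<^bsub>Q\<^esub>) = \<zero>\<^bsub>P\<^esub>"
      using DS xs rc unfolding D_def by meson
    obtain y ys where y: "t = y#ys" "y \<in> T" "y \<in> carrier R" "ys \<in> carrier Q" using mem[OF t(1)] by blast
    have "y \<otimes>\<^bsub>R\<^esub> r = \<zero>\<^bsub>R\<^esub>" using t(2) y r by (simp add: P_mult P_zero)
    thus "\<exists>t\<in>T. t \<otimes>\<^bsub>R\<^esub> r = \<zero>\<^bsub>R\<^esub>" using y by blast
  qed
  moreover have "\<zero>\<^bsub>R\<^esub> \<notin> T"
  proof
    assume "\<zero>\<^bsub>R\<^esub> \<in> T"
    then obtain xs where xs: "\<zero>\<^bsub>R\<^esub> # xs \<in> S" by (auto simp: T_def)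
    have xc: "xs \<in> carrier Q" using xs SC by (auto simp: P_carrier)
    have "(\<zero>\<^bsub>R\<^esub> # xs) \<otimes>\<^bsub>P\<^esub> (a # \<zero>\<^bsub>Q\<^esub>) \<in> S" using DS xs S(2) unfolding D_def by blast
    moreover have "(\<zero>\<^bsub>R\<^esub> # xs) \<otimes>\<^bsub>P\<^esub> (a # \<zero>\<^bsub>Q\<^esub>) = \<zero>\<^bsub>P\<^esub>" using a xc by (simp add: P_mult P_zero)
    ultimately show False using S0 by simp
  qed
  moreover have "a \<in> T" using S(2) by (auto simp: T_def)
  ultimately show "\<exists>S. left_denominator_set R S \<and> a \<in> S" by (auto simp: lds_D)
qed

lemma loc_fwd2:
  assumes "left_localizable P"
  shows "left_localizable Q"
  unfolding left_localizable_def
proof (intro ballI impI)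
  interpret R: ring R by (rule rR)
  interpret Q: ring Q by (rule rQ)
  fix a assume a: "a \<in> carrier Q" and a0: "a \<noteq> \<zero>\<^bsub>Q\<^esub>"
  have pc: "\<zero>\<^bsub>R\<^esub> # a \<in> carrier P" using a by (auto simp: P_carrier)
  have "\<zero>\<^bsub>R\<^esub> # a \<noteq> \<zero>\<^bsub>P\<^esub>" using a0 by (simp add: P_zero)
  then obtain S where S: "left_denominator_set P S" "\<zero>\<^bsub>R\<^esub> # a \<in> S"
    using assms pc unfolding left_localizable_def by blast
  have DS: "D P S" and S0: "\<zero>\<^bsub>P\<^esub> \<notin> S" using S(1) by (auto simp: lds_D)
  have SC: "S \<subseteq> carrier P" using DS by (simp add: D_def)
  define T where "T = {xs. \<exists>x. x#xs \<in> S}"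
  have Tc: "T \<subseteq> carrier Q" using SC by (auto simp: T_def P_carrier)
  have mem: "\<And>s. s \<in> S \<Longrightarrow> \<exists>x xs. s = x#xs \<and> xs \<in> T \<and> x \<in> carrier R \<and> xs \<in> carrier Q"
    using SC unfolding T_def P_carrier by blast
  have "D Q T" unfolding D_def
  proof (intro conjI ballI impI)
    show "T \<subseteq> carrier Q" by (rule Tc)
    show "\<one>\<^bsub>Q\<^esub> \<in> T" using DS by (auto simp: D_def T_def P_one)
  next
    fix xs ys assume "xs \<in> T" "ys \<in> T"
    then obtain x y where "x#xs \<in> S" "y#ys \<in> S" by (auto simp: T_def)
    moreover have "(x#xs) \<otimes>\<^bsub>P\<^esub> (y#ys) = (x \<otimes>\<^bsub>R\<^esub> y) # (xs \<otimes>\<^bsub>Q\<^esub> ys)"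
      using calculation SC by (intro P_mult) (auto simp: P_carrier)
    ultimately show "xs \<otimes>\<^bsub>Q\<^esub> ys \<in> T" using DS unfolding D_def T_def by (metis (mono_tags, lifting) mem_Collect_eq)
  next
    fix r xs assume r: "r \<in> carrier Q" and "xs \<in> T"
    then obtain x where xs: "x#xs \<in> S" by (auto simp: T_def)
    have xc: "x \<in> carrier R" "xs \<in> carrier Q" using xs SC by (auto simp: P_carrier)
    have rc: "\<zero>\<^bsub>R\<^esub> # r \<in> carrier P" using r by (auto simp: P_carrier)
    obtain s' r' where 1: "s' \<in> S" "r' \<in> carrier P" "s' \<otimes>\<^bsub>P\<^esub> (\<zero>\<^bsub>R\<^esub> # r) = r' \<otimes>\<^bsub>P\<^esub> (x#xs)"
      using DS xs rc unfolding D_def by meson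
    obtain y ys where y: "s' = y#ys" "ys \<in> T" "y \<in> carrier R" "ys \<in> carrier Q" using mem[OF 1(1)] by blast
    obtain z zs where z: "r' = z#zs" "z \<in> carrier R" "zs \<in> carrier Q" using 1(2) by (auto simp: P_carrier)
    have "ys \<otimes>\<^bsub>Q\<^esub> r = zs \<otimes>\<^bsub>Q\<^esub> xs" using 1(3) y z xc r by (simp add: P_mult)
    thus "\<exists>s'\<in>T. \<exists>r'\<in>carrier Q. s' \<otimes>\<^bsub>Q\<^esub> r = r' \<otimes>\<^bsub>Q\<^esub> xs" using y z by blast
  next
    fix r xs assume r: "r \<in> carrier Q" and "xs \<in> T" and rx: "r \<otimes>\<^bsub>Q\<^esub> xs = \<zero>\<^bsub>Q\<^esub>"
    then obtain x where xs: "x#xs \<in> S" by (auto simp: T_def)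
    have xc: "x \<in> carrier R" "xs \<in> carrier Q" using xs SC by (auto simp: P_carrier)
    have rc: "\<zero>\<^bsub>R\<^esub> # r \<in> carrier P" using r by (auto simp: P_carrier)
    have "(\<zero>\<^bsub>R\<^esub> # r) \<otimes>\<^bsub>P\<^esub> (x#xs) = \<zero>\<^bsub>P\<^esub>" using rx r xc by (simp add: P_mult P_zero)
    then obtain t where t: "t \<in> S" "t \<otimes>\<^bsub>P\<^esub> (\<zero>\<^bsub>R\<^esub> # r) = \<zero>\<^bsub>P\<^esub>"
      using DS xs rc unfolding D_def by meson
    obtain y ys where y: "t = y#ys" "ys \<in> T" "y \<in> carrier R" "ys \<in> carrier Q" using mem[OF t(1)] by blast
    have "ys \<otimes>\<^bsub>Q\<^esub> r = \<zero>\<^bsub>Q\<^esub>" using t(2) y r by (simp add: P_mult P_zero)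
    thus "\<exists>t\<in>T. t \<otimes>\<^bsub>Q\<^esub> r = \<zero>\<^bsub>Q\<^esub>" using y by blast
  qed
  moreover have "\<zero>\<^bsub>Q\<^esub> \<notin> T"
  proof
    assume "\<zero>\<^bsub>Q\<^esub> \<in> T"
    then obtain x where xs: "x # \<zero>\<^bsub>Q\<^esub> \<in> S" by (auto simp: T_def)
    have xc: "x \<in> carrier R" using xs SC by (auto simp: P_carrier)
    have "(x # \<zero>\<^bsub>Q\<^esub>) \<otimes>\<^bsub>P\<^esub> (\<zero>\<^bsub>R\<^esub> # a) \<in> S" using DS xs S(2) unfolding D_def by blast
    moreover have "(x # \<zero>\<^bsub>Q\<^esub>) \<otimes>\<^bsub>P\<^esub> (\<zero>\<^bsub>R\<^esub> # a) = \<zero>\<^bsub>P\<^esub>" using a xc by (simp add: P_mult P_zero)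
    ultimately show False using S0 by simp
  qed
  moreover have "a \<in> T" using S(2) by (auto simp: T_def)
  ultimately show "\<exists>S. left_denominator_set Q S \<and> a \<in> S" by (auto simp: lds_D)
qed

end

theorem theorem3p1:
  fixes Rs :: "('a, 'n) ring_scheme list"
  assumes "\<forall>R\<in>set Rs. ring R"
  shows "left_localizable (RDirProd_list Rs) \<longleftrightarrow> (\<forall>R\<in>set Rs. left_localizable R)"
  using assms
proof (induction Rs)
  case Nil
  have z: "\<zero>\<^bsub>RDirProd_list ([] :: ('a, 'n) ring_scheme list)\<^esub> = []" unfolding RDirProd_list_nil by (simp add: monoid.defs)
  have c: "carrier (RDirProd_list ([] :: ('a, 'n) ring_scheme list)) = {[]}" by simp
  have "left_localizable (RDirProd_list ([] :: ('a, 'n) ring_scheme list))" unfolding left_localizable_def z c by simp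
  then show ?case by simp
next
  case (Cons R Rs)
  have rR: "ring R" using Cons.prems by simp
  have rQ: "ring (RDirProd_list Rs)" using Cons.prems by (intro RDirProd_list_is_ring) auto
  have IH: "left_localizable (RDirProd_list Rs) \<longleftrightarrow> (\<forall>R\<in>set Rs. left_localizable R)"
    using Cons by simp
  have "left_localizable (RDirProd_list (R#Rs)) \<longleftrightarrow> left_localizable R \<and> left_localizable (RDirProd_list Rs)"
    using loc_back[OF rR rQ] loc_fwd1[OF rR rQ] loc_fwd2[OF rR rQ] by blast
  also have "\<dots> \<longleftrightarrow> (\<forall>R'\<in>set (R#Rs). left_localizable R')" using IH by simp
  finally show ?case .
qed

end
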